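(* Let $d\ge 2$ and let $|\psi^1\rangle,|\psi^2\rangle\in\mathbb{C}^d$ be arbitrary one-qudit states. Consider eight qudits labelled $1,\dots,8$ in the state $$|\Psi\rangle=|\psi^1\rangle_1|\psi^2\rangle_5|H\rangle_{26}|H\rangle_{34}|H\rangle_{78},$$ where $|H\rangle=\sum_{j,k\in\mathbb{Z}_d}\omega^{jk}|j\rangle|k\rangle$. For $r,s,t\in\mathbb{Z}_d$ let $|b_{rst}\rangle=(X^r\otimes Z^s\otimes X^t)\sum_{m\in\mathbb{Z}_d}|m\rangle|m\rangle|m\rangle$ (these $d^3$ vectors form an orthogonal basis $B_2$ of three qudits). Suppose qudits $1,2,3$ (in this order) are measured in $B_2$ with outcome $r,s,t$ and qudits $5,6,7$ (in this order) are measured in $B_2$ with outcome $u,v,w$. Then the resulting (unnormalised) state of qudits $4,8$, namely $(\langle b_{rst}|_{123}\otimes\langle b_{uvw}|_{567})|\Psi\rangle$, equals, up to a nonzero scalar factor independent of $\psi^1,\psi^2$, $$Z_4^{t-r}Z_8^{w-u}X_4^{s+u}X_8^{v+r}F_4F_8C_{Z(4,8)}|\psi^1\rangle_4|\psi^2\rangle_8.$$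
   Context: $\omega=e^{2\pi i/d}$; $X|j\rangle=|j+1\bmod d\rangle$, $Z|j\rangle=\omega^j|j\rangle$, $F|j\rangle=\frac1{\sqrt d}\sum_{m\in\mathbb{Z}_d}\omega^{jm}|m\rangle$. $C_{Z(4,8)}$ is the controlled-$Z$ gate $|j\rangle_4|k\rangle_8\mapsto\omega^{jk}|j\rangle_4|k\rangle_8$. Subscripts indicate the qudit on which an operator acts. *)

theory Defs
  imports Complex_Main
begin

text \<open>Qudit vectors in C^d are functions nat => complex, only the entries at indices 0..d-1
  being relevant; two-qudit vectors are functions nat => nat => complex.\<close>

definition omega :: "nat \<Rightarrow> complex" where
  "omega d = cis (2 * pi / real d)"

definition Xpow :: "nat \<Rightarrow> int \<Rightarrow> (nat \<Rightarrow> complex) \<Rightarrow> (nat \<Rightarrow> complex)" where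
  "Xpow d n f = (\<lambda>a. f (nat ((int a - n) mod int d)))"

definition Zpow :: "nat \<Rightarrow> int \<Rightarrow> (nat \<Rightarrow> complex) \<Rightarrow> (nat \<Rightarrow> complex)" where
  "Zpow d n f = (\<lambda>a. omega d powi (n * int a) * f a)"

definition Fourier :: "nat \<Rightarrow> (nat \<Rightarrow> complex) \<Rightarrow> (nat \<Rightarrow> complex)" where
  "Fourier d f = (\<lambda>m. complex_of_real (1 / sqrt (real d)) * (\<Sum>j<d. omega d ^ (j * m) * f j))"

definition on_first :: "((nat \<Rightarrow> complex) \<Rightarrow> (nat \<Rightarrow> complex)) \<Rightarrow> (nat \<Rightarrow> nat \<Rightarrow> complex) \<Rightarrow> (nat \<Rightarrow> nat \<Rightarrow> complex)" where
  "on_first O\<^sub>p \<phi> = (\<lambda>a b. O\<^sub>p (\<lambda>j. \<phi> j b) a)"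

definition on_second :: "((nat \<Rightarrow> complex) \<Rightarrow> (nat \<Rightarrow> complex)) \<Rightarrow> (nat \<Rightarrow> nat \<Rightarrow> complex) \<Rightarrow> (nat \<Rightarrow> nat \<Rightarrow> complex)" where
  "on_second O\<^sub>p \<phi> = (\<lambda>a b. O\<^sub>p (\<phi> a) b)"

definition CZ :: "nat \<Rightarrow> (nat \<Rightarrow> nat \<Rightarrow> complex) \<Rightarrow> (nat \<Rightarrow> nat \<Rightarrow> complex)" where
  "CZ d \<phi> = (\<lambda>j k. omega d ^ (j * k) * \<phi> j k)"

definition Hst :: "nat \<Rightarrow> nat \<Rightarrow> nat \<Rightarrow> complex" where
  "Hst d j k = omega d ^ (j * k)"

text \<open>|b_rst> = (X^r \<otimes> Z^s \<otimes> X^t) sum_m |m>|m>|m> = sum_m omega^(sm) |m+r>|m>|m+t>,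
  coefficient at (a,b,c) with a,b,c < d.\<close>
definition bvec :: "nat \<Rightarrow> nat \<Rightarrow> nat \<Rightarrow> nat \<Rightarrow> nat \<Rightarrow> nat \<Rightarrow> nat \<Rightarrow> complex" where
  "bvec d r s t a b c =
     (if a = (b + r) mod d \<and> c = (b + t) mod d then omega d ^ (s * b) else 0)"

definition Psi :: "nat \<Rightarrow> (nat \<Rightarrow> complex) \<Rightarrow> (nat \<Rightarrow> complex) \<Rightarrow>
    nat \<Rightarrow> nat \<Rightarrow> nat \<Rightarrow> nat \<Rightarrow> nat \<Rightarrow> nat \<Rightarrow> nat \<Rightarrow> nat \<Rightarrow> complex" where
  "Psi d \<psi>1 \<psi>2 j1 j2 j3 j4 j5 j6 j7 j8 =
     \<psi>1 j1 * \<psi>2 j5 * Hst d j2 j6 * Hst d j3 j4 * Hst d j7 j8"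

definition measured :: "nat \<Rightarrow> (nat \<Rightarrow> complex) \<Rightarrow> (nat \<Rightarrow> complex) \<Rightarrow>
    nat \<Rightarrow> nat \<Rightarrow> nat \<Rightarrow> nat \<Rightarrow> nat \<Rightarrow> nat \<Rightarrow> nat \<Rightarrow> nat \<Rightarrow> complex" where
  "measured d \<psi>1 \<psi>2 r s t u v w =
     (\<lambda>j4 j8. \<Sum>j1<d. \<Sum>j2<d. \<Sum>j3<d. \<Sum>j5<d. \<Sum>j6<d. \<Sum>j7<d.
        cnj (bvec d r s t j1 j2 j3) * cnj (bvec d u v w j5 j6 j7) *
        Psi d \<psi>1 \<psi>2 j1 j2 j3 j4 j5 j6 j7 j8)"

end

theory Submission
  imports Defs
begin

lemma om_nz: "omega d \<noteq> 0"
  by (simp add: omega_def)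

lemma om_d: "d > 0 \<Longrightarrow> omega d ^ d = 1"
  by (simp add: omega_def DeMoivre)

lemma om_period: "d > 0 \<Longrightarrow> omega d powi (int d * K) = 1"
  by (simp add: power_int_mult om_d)

lemma om_cong: "d > 0 \<Longrightarrow> x = y + int d * K \<Longrightarrow> omega d powi x = omega d powi y"
  by (simp add: power_int_add om_nz om_period)

lemma cnj_om: "cnj (omega d ^ n) = omega d powi (- int n)"
  by (simp add: omega_def DeMoivre power_int_minus cis_cnj flip: cis_inverse)

lemma sum_shift:
  fixes f :: "nat \<Rightarrow> 'a::comm_monoid_add"
  shows "(\<Sum>m<d. f ((m + r) mod d)) = (\<Sum>j<d. f j)"
proof (cases "d = 0")
  case True then show ?thesis by simp
next
  case False
  have inj: "inj_on (\<lambda>m. (m + r) mod d) {..<d}"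
  proof (rule inj_onI)
    fix x y assume x: "x \<in> {..<d}" and y: "y \<in> {..<d}" and e: "(x + r) mod d = (y + r) mod d"
    from e have "int ((x + r) mod d) = int ((y + r) mod d)" by simp
    then have "(int x + int r) mod int d = (int y + int r) mod int d" by (simp add: zmod_int)
    then have "((int x + int r) mod int d - int r) mod int d = ((int y + int r) mod int d - int r) mod int d"
      by simp
    then have "int x mod int d = int y mod int d" by (simp add: mod_diff_left_eq)
    then show "x = y" using x y by simp
  qed
  have "(\<lambda>m. (m + r) mod d) ` {..<d} = {..<d}"
    by (rule endo_inj_surj) (use False inj in auto)
  then have "bij_betw (\<lambda>m. (m + r) mod d) {..<d} {..<d}" using inj by (simp add: bij_betw_def)
  then show ?thesis by (rule sum.reindex_bij_betw)
qed

lemma cnj_if0: "cnj (if P then x else 0) * y = (if P then cnj x * y else 0)"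
  by simp

lemma sum_bvec:
  assumes "d > 0"
  shows "(\<Sum>j1<d. \<Sum>j2<d. \<Sum>j3<d. cnj (bvec d r s t j1 j2 j3) * G j1 j2 j3)
       = (\<Sum>m<d. cnj (omega d ^ (s*m)) * G ((m+r) mod d) m ((m+t) mod d))"
proof -
  have "(\<Sum>j1<d. \<Sum>j2<d. \<Sum>j3<d. cnj (bvec d r s t j1 j2 j3) * G j1 j2 j3)
      = (\<Sum>j2<d. \<Sum>j1<d. \<Sum>j3<d. cnj (bvec d r s t j1 j2 j3) * G j1 j2 j3)"
    by (rule sum.swap)
  also have "\<dots> = (\<Sum>m<d. cnj (omega d ^ (s*m)) * G ((m+r) mod d) m ((m+t) mod d))"
  proof (rule sum.cong[OF refl])
    fix m assume "m \<in> {..<d}"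
    have "(\<Sum>j1<d. \<Sum>j3<d. cnj (bvec d r s t j1 m j3) * G j1 m j3)
       = (\<Sum>j1<d. if j1 = (m+r) mod d then (\<Sum>j3<d. if j3 = (m+t) mod d then cnj (omega d ^ (s*m)) * G j1 m j3 else 0) else 0)"
    proof (rule sum.cong[OF refl])
      fix j1 show "(\<Sum>j3<d. cnj (bvec d r s t j1 m j3) * G j1 m j3) = (if j1 = (m+r) mod d then (\<Sum>j3<d. if j3 = (m+t) mod d then cnj (omega d ^ (s*m)) * G j1 m j3 else 0) else 0)"
        by (cases "j1 = (m+r) mod d") (auto simp: bvec_def cnj_if0 intro!: sum.cong)
    qed
    also have "\<dots> = cnj (omega d ^ (s*m)) * G ((m+r) mod d) m ((m+t) mod d)"
      using assms by simp
    finally show "(\<Sum>j1<d. \<Sum>j3<d. cnj (bvec d r s t j1 m j3) * G j1 m j3) = cnj (omega d ^ (s*m)) * G ((m+r) mod d) m ((m+t) mod d)" .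
  qed
  finally show ?thesis .
qed

lemma zmod_wit: "\<exists>q. (x::int) mod int d = x - int d * q"
  by (metis minus_div_mult_eq_mod mult.commute)

lemma core:
  assumes d0: "d > 0"
  shows "cnj (omega d ^ (s*m)) * (cnj (omega d ^ (v*n)) * (x * y * Hst d m n * Hst d ((m+t) mod d) a * Hst d ((n+w) mod d) b))
   = (of_nat d * omega d powi (int r*int u + int s*int r + int v*int u)) *
     (complex_of_real (1 / sqrt (real d)) * complex_of_real (1 / sqrt (real d)) *
      omega d powi ((int t - int r) * int a) * omega d powi ((int w - int u) * int b) *
      omega d ^ (((m+r) mod d) * nat ((int a - (int s + int u)) mod int d)) *
      omega d ^ (((n+u) mod d) * nat ((int b - (int v + int r)) mod int d)) *
      omega d ^ (((m+r) mod d) * ((n+u) mod d)) * x * y)"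
proof -
  define J where "J = (m+r) mod d"
  define K where "K = (n+u) mod d"
  define T where "T = (m+t) mod d"
  define W where "W = (n+w) mod d"
  define A where "A = nat ((int a - (int s + int u)) mod int d)"
  define B where "B = nat ((int b - (int v + int r)) mod int d)"
  obtain q1 where h1: "int J = int m + int r - int d * q1"
    using zmod_wit[of "int m + int r" d] unfolding J_def by (auto simp: zmod_int)
  obtain q2 where h2: "int K = int n + int u - int d * q2"
    using zmod_wit[of "int n + int u" d] unfolding K_def by (auto simp: zmod_int)
  obtain q3 where h3: "int T = int m + int t - int d * q3"
    using zmod_wit[of "int m + int t" d] unfolding T_def by (auto simp: zmod_int)
  obtain q4 where h4: "int W = int n + int w - int d * q4"
    using zmod_wit[of "int n + int w" d] unfolding W_def by (auto simp: zmod_int)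
  obtain q5 where h5: "int A = int a - int s - int u - int d * q5"
    using zmod_wit[of "int a - (int s + int u)" d] d0 unfolding A_def by auto
  obtain q6 where h6: "int B = int b - int v - int r - int d * q6"
    using zmod_wit[of "int b - (int v + int r)" d] d0 unfolding B_def by auto
  define E1 where "E1 = - (int s * int m) + - (int v * int n) + int m * int n + int T * int a + int W * int b"
  define E2 where "E2 = (int r*int u + int s*int r + int v*int u) + (int t - int r) * int a + (int w - int u) * int b
     + int J * int A + int K * int B + int J * int K"
  define Q where "Q = -(q3 * int a + q4 * int b) + (q1 * (int a - int s - int u) + q5 * (int m + int r) - int d * q1 * q5)
     + (q2 * (int b - int v - int r) + q6 * (int n + int u) - int d * q2 * q6)
     + (q1 * (int n + int u) + q2 * (int m + int r) - int d * q1 * q2)"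
  have EE: "E1 = E2 + int d * Q"
    unfolding E1_def E2_def Q_def using h1 h2 h3 h4 h5 h6 by algebra
  have L: "cnj (omega d ^ (s*m)) * (cnj (omega d ^ (v*n)) * (x * y * Hst d m n * Hst d T a * Hst d W b))
     = x * y * omega d powi E1"
  proof -
    have "omega d powi E1 = omega d powi (- int (s*m)) * omega d powi (- int (v*n)) * omega d powi int (m*n)
       * omega d powi int (T*a) * omega d powi int (W*b)"
      unfolding E1_def of_nat_mult by (simp only: power_int_add[OF disjI1[OF om_nz]])
    then show ?thesis unfolding Hst_def cnj_om power_int_of_nat by (simp only: mult_ac)
  qed
  have R: "(of_nat d * omega d powi (int r*int u + int s*int r + int v*int u)) *
     (complex_of_real (1 / sqrt (real d)) * complex_of_real (1 / sqrt (real d)) *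
      omega d powi ((int t - int r) * int a) * omega d powi ((int w - int u) * int b) *
      omega d ^ (J * A) * omega d ^ (K * B) * omega d ^ (J * K) * x * y)
     = x * y * omega d powi E2"
  proof -
    have s: "complex_of_real (1 / sqrt (real d)) * complex_of_real (1 / sqrt (real d)) * of_nat d = 1"
      using d0 by (simp flip: of_real_mult) 
    have "omega d powi E2 = omega d powi (int r*int u + int s*int r + int v*int u) * omega d powi ((int t - int r) * int a) * omega d powi ((int w - int u) * int b)
       * omega d powi int (J*A) * omega d powi int (K*B) * omega d powi int (J*K)"
      unfolding E2_def of_nat_mult by (simp only: power_int_add[OF disjI1[OF om_nz]])
    then have e: "x * y * omega d powi E2 = (complex_of_real (1 / sqrt (real d)) * complex_of_real (1 / sqrt (real d)) * of_nat d) * (omega d powi (int r*int u + int s*int r + int v*int u) * omega d powi ((int t - int r) * int a) * omega d powi ((int w - int u) * int b)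
       * omega d ^ (J*A) * omega d ^ (K*B) * omega d ^ (J*K) * x * y)"
      unfolding s power_int_of_nat by (simp only: mult_ac mult_1_left)
    show ?thesis unfolding e by (simp only: mult_ac)
  qed
  have "omega d powi E1 = omega d powi E2" using om_cong[OF d0 EE] .
  then show ?thesis using L R unfolding J_def K_def T_def W_def A_def B_def by simp
qed

theorem lemma1:
  fixes d r s t u v w :: nat
  assumes "d \<ge> 2"
    and "r < d" "s < d" "t < d" "u < d" "v < d" "w < d"
  shows "\<exists>c::complex. c \<noteq> 0 \<and>
    (\<forall>\<psi>1 \<psi>2 :: nat \<Rightarrow> complex. \<forall>a<d. \<forall>b<d.
       measured d \<psi>1 \<psi>2 r s t u v w a b =
       c * (on_first (Zpow d (int t - int r))
             (on_second (Zpow d (int w - int u))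
               (on_first (Xpow d (int s + int u))
                 (on_second (Xpow d (int v + int r))
                   (on_first (Fourier d)
                     (on_second (Fourier d)
                       (CZ d (\<lambda>j k. \<psi>1 j * \<psi>2 k)))))))) a b)"
proof -
  have d0: "d > 0" using assms(1) by simp
  define c where "c = of_nat d * omega d powi (int r*int u + int s*int r + int v*int u)"
  have cnz: "c \<noteq> 0" using d0 om_nz unfolding c_def by simp
  show ?thesis
  proof (intro exI conjI allI impI)
    show "c \<noteq> 0" by (rule cnz)
    fix \<psi>1 \<psi>2 :: "nat \<Rightarrow> complex" and a b assume a: "a < d" and b: "b < d"
    define A where "A = nat ((int a - (int s + int u)) mod int d)"
    define B where "B = nat ((int b - (int v + int r)) mod int d)"
    define sq where "sq = complex_of_real (1 / sqrt (real d))"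
    define R where "R = (\<lambda>j k. sq * sq *
      omega d powi ((int t - int r) * int a) * omega d powi ((int w - int u) * int b) *
      omega d ^ (j * A) * omega d ^ (k * B) * omega d ^ (j * k) * \<psi>1 j * \<psi>2 k)"
    have M: "measured d \<psi>1 \<psi>2 r s t u v w a b = (\<Sum>m<d. \<Sum>n<d. cnj (omega d ^ (s*m)) * (cnj (omega d ^ (v*n)) *
       (\<psi>1 ((m+r) mod d) * \<psi>2 ((n+u) mod d) * Hst d m n * Hst d ((m+t) mod d) a * Hst d ((n+w) mod d) b)))"
    proof -
      have "measured d \<psi>1 \<psi>2 r s t u v w a b = (\<Sum>j1<d. \<Sum>j2<d. \<Sum>j3<d. cnj (bvec d r s t j1 j2 j3) *
         (\<Sum>j5<d. \<Sum>j6<d. \<Sum>j7<d. cnj (bvec d u v w j5 j6 j7) *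
           (\<psi>1 j1 * \<psi>2 j5 * Hst d j2 j6 * Hst d j3 a * Hst d j7 b)))"
        unfolding measured_def Psi_def by (simp add: sum_distrib_left mult.assoc)
      also have "\<dots> = (\<Sum>m<d. \<Sum>n<d. cnj (omega d ^ (s*m)) * (cnj (omega d ^ (v*n)) *
       (\<psi>1 ((m+r) mod d) * \<psi>2 ((n+u) mod d) * Hst d m n * Hst d ((m+t) mod d) a * Hst d ((n+w) mod d) b)))"
        by (subst sum_bvec[OF d0], simp only: sum_bvec[OF d0] sum_distrib_left)
      finally show ?thesis .
    qed
    have RH: "c * (on_first (Zpow d (int t - int r))
             (on_second (Zpow d (int w - int u))
               (on_first (Xpow d (int s + int u))
                 (on_second (Xpow d (int v + int r))
                   (on_first (Fourier d)
                     (on_second (Fourier d)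
                       (CZ d (\<lambda>j k. \<psi>1 j * \<psi>2 k)))))))) a b
       = (\<Sum>j<d. \<Sum>k<d. c * R j k)"
      unfolding on_first_def on_second_def Zpow_def Xpow_def Fourier_def CZ_def R_def A_def B_def sq_def
      by (simp add: sum_distrib_left mult_ac)
    also have "\<dots> = (\<Sum>m<d. \<Sum>n<d. c * R ((m+r) mod d) ((n+u) mod d))"
    proof -
      have "(\<Sum>m<d. \<Sum>n<d. c * R ((m+r) mod d) ((n+u) mod d)) = (\<Sum>m<d. \<Sum>k<d. c * R ((m+r) mod d) k)"
        by (rule sum.cong[OF refl]) (rule sum_shift[of "\<lambda>k. c * R _ k", simplified])
      also have "\<dots> = (\<Sum>j<d. \<Sum>k<d. c * R j k)"
        by (rule sum_shift[of "\<lambda>j. \<Sum>k<d. c * R j k", simplified])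
      finally show ?thesis by simp
    qed
    also have "\<dots> = measured d \<psi>1 \<psi>2 r s t u v w a b"
      unfolding M
      by (intro sum.cong refl) (unfold c_def R_def A_def B_def sq_def, rule core[OF d0, symmetric])
    finally show "measured d \<psi>1 \<psi>2 r s t u v w a b = c * (on_first (Zpow d (int t - int r))
             (on_second (Zpow d (int w - int u))
               (on_first (Xpow d (int s + int u))
                 (on_second (Xpow d (int v + int r))
                   (on_first (Fourier d)
                     (on_second (Fourier d)
                       (CZ d (\<lambda>j k. \<psi>1 j * \<psi>2 k)))))))) a b" by simp
  qed
qed

end
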